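(* Let $f:\mathbb{R}^d\to\mathbb{R}$ be $L$-smooth ($L>0$) and bounded below. Suppose the set $f^\star(\epsilon)$ is bounded for some $\epsilon>0$. Then for every $\sigma$ with $0<\sigma<\sqrt{\frac{4\epsilon}{3Ld}}$, the function $f_\sigma$ attains its minimum on $\mathbb{R}^d$.
   Context: For $\epsilon\ge0$, $f^\star(\epsilon)=\{\mathbf{x}\in\mathbb{R}^d: f(\mathbf{x})-\inf_{\mathbb{R}^d}f\le\epsilon\}$. $f_\sigma(\mathbf{x})=\pi^{-d/2}\int_{\mathbb{R}^d} f(\mathbf{x}+\sigma\mathbf{u})\,e^{-\|\mathbf{u}\|_2^2}\,d\mathbf{u}$. $L$-smooth means differentiable with $L$-Lipschitz gradient. *)

theory Defs
  imports "HOL-Analysis.Analysis"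
begin

definition L_smooth :: "real \<Rightarrow> ('a::euclidean_space \<Rightarrow> real) \<Rightarrow> bool" where
  "L_smooth L f \<longleftrightarrow> (\<exists>g. (\<forall>x. (f has_derivative (\<lambda>h. g x \<bullet> h)) (at x)) \<and>
      (\<forall>x y. norm (g x - g y) \<le> L * norm (x - y)))"

definition sublevel_opt :: "('a \<Rightarrow> real) \<Rightarrow> real \<Rightarrow> 'a set" where
  "sublevel_opt f \<epsilon> = {x. f x - (INF y. f y) \<le> \<epsilon>}"

definition gauss_smooth :: "('a::euclidean_space \<Rightarrow> real) \<Rightarrow> real \<Rightarrow> 'a \<Rightarrow> real" where
  "gauss_smooth f \<sigma> x = pi powr (- real DIM('a) / 2) *
     (\<integral>u. f (x + \<sigma> *\<^sub>R u) * exp (- (norm u)\<^sup>2) \<partial>lborel)"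

end

theory Submission
  imports Defs "HOL-Probability.Probability"
begin

lemma g0: "has_bochner_integral lborel (\<lambda>x::real. exp (- x\<^sup>2)) (sqrt pi)"
  using has_bochner_integral_even_function[OF gaussian_moment_0] by simp

lemma g2: "has_bochner_integral lborel (\<lambda>x::real. x\<^sup>2 * exp (- x\<^sup>2)) (sqrt pi / 2)"
proof -
  have "has_bochner_integral lborel (\<lambda>x::real. exp (- x\<^sup>2) * x ^ (2 * 1)) (2 *\<^sub>R ((sqrt pi / 2) * (fact (2 * 1) / (2 ^ (2 * 1) * fact 1))))"
    by (rule has_bochner_integral_even_function[OF gaussian_moment_even_pos]) simp
  then show ?thesis by (simp add: mult.commute fact_numeral)
qed

lemma nn0: "(\<integral>\<^sup>+x. ennreal (exp (- x\<^sup>2)) \<partial>lborel) = ennreal (sqrt pi)"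
  using g0 by (subst nn_integral_eq_integral) (auto simp: has_bochner_integral_iff)

lemma nn2: "(\<integral>\<^sup>+x. ennreal (x\<^sup>2 * exp (- x\<^sup>2)) \<partial>lborel) = ennreal (sqrt pi / 2)"
  using g2 by (subst nn_integral_eq_integral) (auto simp: has_bochner_integral_iff)


lemma norm_sq_sum: "(norm (u::'a::euclidean_space))\<^sup>2 = (\<Sum>b\<in>Basis. (u \<bullet> b)\<^sup>2)"
  unfolding power2_norm_eq_inner using euclidean_inner[of u u] by (simp add: power2_eq_square)

lemma w_prod: "exp (- (norm (u::'a::euclidean_space))\<^sup>2) = (\<Prod>b\<in>Basis. exp (- (u \<bullet> b)\<^sup>2))"
  by (simp add: norm_sq_sum exp_sum[symmetric] sum_negf)

lemma nnZ: "(\<integral>\<^sup>+u. ennreal (exp (- (norm (u::'a::euclidean_space))\<^sup>2)) \<partial>lborel) = ennreal (sqrt pi ^ DIM('a))"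
proof -
  have "(\<integral>\<^sup>+u. ennreal (exp (- (norm (u::'a))\<^sup>2)) \<partial>lborel)
      = (\<integral>\<^sup>+u. (\<Prod>b\<in>(Basis::'a set). (\<lambda>t. ennreal (exp (- t\<^sup>2))) (u \<bullet> b)) \<partial>lborel)"
    by (simp add: w_prod prod_ennreal)
  also have "\<dots> = (\<Prod>b\<in>(Basis::'a set). (\<integral>\<^sup>+t. ennreal (exp (- t\<^sup>2)) \<partial>lborel))"
    by (rule nn_integral_lborel_prod) auto
  also have "\<dots> = ennreal (sqrt pi ^ DIM('a))"
    by (simp add: nn0 ennreal_power)
  finally show ?thesis .
qed

lemma nnMb:
  assumes b0: "b0 \<in> (Basis::'a::euclidean_space set)"
  shows "(\<integral>\<^sup>+u. ennreal ((u \<bullet> b0)\<^sup>2 * exp (- (norm (u::'a))\<^sup>2)) \<partial>lborel) = ennreal (sqrt pi ^ DIM('a) / 2)"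
proof -
  define F where "F = (\<lambda>b (t::real). if b = b0 then ennreal (t\<^sup>2 * exp (- t\<^sup>2)) else ennreal (exp (- t\<^sup>2)))"
  have eq: "ennreal ((u \<bullet> b0)\<^sup>2 * exp (- (norm (u::'a))\<^sup>2)) = (\<Prod>b\<in>Basis. F b (u \<bullet> b))" for u
  proof -
    have "(\<Prod>b\<in>Basis. F b (u \<bullet> b)) = F b0 (u \<bullet> b0) * (\<Prod>b\<in>Basis - {b0}. F b (u \<bullet> b))"
      using b0 by (simp add: prod.remove)
    also have "(\<Prod>b\<in>Basis - {b0}. F b (u \<bullet> b)) = (\<Prod>b\<in>Basis - {b0}. ennreal (exp (- (u \<bullet> b)\<^sup>2)))"
      by (rule prod.cong) (auto simp: F_def)
    also have "\<dots> = ennreal (\<Prod>b\<in>Basis - {b0}. exp (- (u \<bullet> b)\<^sup>2))"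
      by (simp add: prod_ennreal)
    finally have "(\<Prod>b\<in>Basis. F b (u \<bullet> b)) = ennreal ((u \<bullet> b0)\<^sup>2 * exp (- (u \<bullet> b0)\<^sup>2)) * ennreal (\<Prod>b\<in>Basis - {b0}. exp (- (u \<bullet> b)\<^sup>2))"
      by (simp add: F_def)
    also have "\<dots> = ennreal ((u \<bullet> b0)\<^sup>2 * (exp (- (u \<bullet> b0)\<^sup>2) * (\<Prod>b\<in>Basis - {b0}. exp (- (u \<bullet> b)\<^sup>2))))"
      by (simp add: ennreal_mult[symmetric] prod_nonneg mult.assoc)
    also have "exp (- (u \<bullet> b0)\<^sup>2) * (\<Prod>b\<in>Basis - {b0}. exp (- (u \<bullet> b)\<^sup>2)) = exp (- (norm u)\<^sup>2)"
      using b0 by (simp add: w_prod prod.remove)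
    finally show ?thesis by simp
  qed
  have "(\<integral>\<^sup>+u. ennreal ((u \<bullet> b0)\<^sup>2 * exp (- (norm (u::'a))\<^sup>2)) \<partial>lborel) = (\<integral>\<^sup>+u. (\<Prod>b\<in>Basis. F b (u \<bullet> b)) \<partial>lborel)"
    by (simp add: eq)
  also have "\<dots> = (\<Prod>b\<in>Basis. (\<integral>\<^sup>+t. F b t \<partial>lborel))"
    by (rule nn_integral_lborel_prod) (auto simp: F_def)
  also have "\<dots> = (\<Prod>b\<in>Basis. ennreal (if b = b0 then sqrt pi / 2 else sqrt pi))"
    by (rule prod.cong) (auto simp: F_def nn0 nn2)
  also have "\<dots> = ennreal (\<Prod>b\<in>Basis. (if b = b0 then sqrt pi / 2 else sqrt pi))"
    by (simp add: prod_ennreal)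
  also have "(\<Prod>b\<in>(Basis::'a set). (if b = b0 then sqrt pi / 2 else sqrt pi)) = sqrt pi / 2 * sqrt pi ^ (DIM('a) - 1)"
    using b0 by (simp add: prod.remove card_Diff_singleton)
  also have "\<dots> = sqrt pi ^ DIM('a) / 2"
  proof -
    have "DIM('a) = Suc (DIM('a) - 1)" using DIM_positive[where 'a='a] by linarith
    then have "sqrt pi ^ DIM('a) = sqrt pi * sqrt pi ^ (DIM('a) - 1)" by (metis power_Suc)
    then show ?thesis by simp
  qed
  finally show ?thesis .
qed

lemma nnM: "(\<integral>\<^sup>+u. ennreal ((norm u)\<^sup>2 * exp (- (norm (u::'a::euclidean_space))\<^sup>2)) \<partial>lborel)
   = ennreal (real DIM('a) * sqrt pi ^ DIM('a) / 2)"
proof -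
  have "(\<integral>\<^sup>+u. ennreal ((norm u)\<^sup>2 * exp (- (norm (u::'a))\<^sup>2)) \<partial>lborel)
     = (\<integral>\<^sup>+u. (\<Sum>b\<in>Basis. ennreal ((u \<bullet> b)\<^sup>2 * exp (- (norm (u::'a))\<^sup>2))) \<partial>lborel)"
    by (simp add: norm_sq_sum sum_distrib_right)
  also have "\<dots> = (\<Sum>b\<in>Basis. (\<integral>\<^sup>+u. ennreal ((u \<bullet> b)\<^sup>2 * exp (- (norm (u::'a))\<^sup>2)) \<partial>lborel))"
    by (rule nn_integral_sum) auto
  also have "\<dots> = (\<Sum>b\<in>(Basis::'a set). ennreal (sqrt pi ^ DIM('a) / 2))"
    by (rule sum.cong) (auto simp: nnMb)
  also have "\<dots> = ennreal (real DIM('a) * sqrt pi ^ DIM('a) / 2)"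
    by (simp add: ennreal_of_nat_eq_real_of_nat ennreal_mult[symmetric])
  finally show ?thesis .
qed


lemma intW: "has_bochner_integral lborel (\<lambda>u::'a::euclidean_space. exp (- (norm u)\<^sup>2)) (sqrt pi ^ DIM('a))"
  by (rule has_bochner_integral_nn_integral) (auto simp: nnZ)

lemma intM: "has_bochner_integral lborel (\<lambda>u::'a::euclidean_space. (norm u)\<^sup>2 * exp (- (norm u)\<^sup>2)) (real DIM('a) * sqrt pi ^ DIM('a) / 2)"
  by (rule has_bochner_integral_nn_integral) (auto simp: nnM)

lemma int_poly: "integrable lborel (\<lambda>u::'a::euclidean_space. (a + b * (norm u)\<^sup>2) * exp (- (norm u)\<^sup>2))"
proof -
  have "integrable lborel (\<lambda>u::'a. a * exp (- (norm u)\<^sup>2) + b * ((norm u)\<^sup>2 * exp (- (norm u)\<^sup>2)))"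
  proof (intro Bochner_Integration.integrable_add Bochner_Integration.integrable_mult_right)
    show "integrable lborel (\<lambda>u::'a. exp (- (norm u)\<^sup>2))"
      using intW[where 'a='a] by (simp add: has_bochner_integral_iff)
    show "integrable lborel (\<lambda>u::'a. (norm u)\<^sup>2 * exp (- (norm u)\<^sup>2))"
      using intM[where 'a='a] by (simp add: has_bochner_integral_iff)
  qed
  then show ?thesis by (simp add: algebra_simps)
qed

lemma lborel_uminus_eq: "distr lborel borel uminus = (lborel :: 'a::euclidean_space measure)"
proof -
  have "lborel = density (distr lborel borel (\<lambda>x::'a. 0 + (-1) *\<^sub>R x)) (\<lambda>_. \<bar>-1::real\<bar>^DIM('a))"
    by (rule lborel_affine) simp
  then show ?thesis by (simp add: density_1)
qed

lemma integral_reflect: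
  fixes h :: "'a::euclidean_space \<Rightarrow> real"
  assumes [measurable]: "h \<in> borel_measurable borel"
  shows "integral\<^sup>L lborel h = integral\<^sup>L lborel (\<lambda>u. h (- u))"
proof -
  have "integral\<^sup>L lborel h = integral\<^sup>L (distr lborel borel uminus) h"
    by (simp add: lborel_uminus_eq)
  also have "\<dots> = integral\<^sup>L lborel (\<lambda>u. h (- u))"
    by (rule integral_distr) auto
  finally show ?thesis .
qed

lemma int_odd: "integral\<^sup>L lborel (\<lambda>u::'a::euclidean_space. (v \<bullet> u) * exp (- (norm u)\<^sup>2)) = 0"
proof -
  let ?h = "\<lambda>u::'a. (v \<bullet> u) * exp (- (norm u)\<^sup>2)"
  have "integral\<^sup>L lborel ?h = integral\<^sup>L lborel (\<lambda>u. ?h (- u))"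
    by (rule integral_reflect) auto
  also have "\<dots> = - integral\<^sup>L lborel ?h"
    by (simp flip: integral_minus)
  finally show ?thesis by simp
qed

lemma quad_bound:
  fixes f :: "'a::euclidean_space \<Rightarrow> real"
  assumes der: "\<And>x. (f has_derivative (\<lambda>h. g x \<bullet> h)) (at x)"
    and lip: "\<And>x y. norm (g x - g y) \<le> L * norm (x - y)"
  shows "\<bar>f y - f x - g x \<bullet> (y - x)\<bar> \<le> L / 2 * (norm (y - x))\<^sup>2"
proof -
  define h where "h = y - x"
  define \<phi> where "\<phi> = (\<lambda>t::real. f (x + t *\<^sub>R h) - t * (g x \<bullet> h))"
  have d\<phi>: "(\<phi> has_real_derivative (g (x + t *\<^sub>R h) \<bullet> h - g x \<bullet> h)) (at t)" for t
  proof -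
    have "((\<lambda>t. x + t *\<^sub>R h) has_derivative (\<lambda>s. s *\<^sub>R h)) (at t)"
      by (auto intro!: derivative_eq_intros)
    from has_derivative_compose[OF this der]
    have "((\<lambda>t. f (x + t *\<^sub>R h)) has_derivative (\<lambda>s. g (x + t *\<^sub>R h) \<bullet> (s *\<^sub>R h))) (at t)" .
    then have "((\<lambda>t. f (x + t *\<^sub>R h)) has_real_derivative (g (x + t *\<^sub>R h) \<bullet> h)) (at t)"
      by (rule has_derivative_imp_has_field_derivative) simp
    then show ?thesis unfolding \<phi>_def
      by (auto intro!: derivative_eq_intros)
  qed
  have dbound: "\<bar>g (x + t *\<^sub>R h) \<bullet> h - g x \<bullet> h\<bar> \<le> L * t * (norm h)\<^sup>2" if "0 \<le> t" for t
  proof -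
    have "\<bar>g (x + t *\<^sub>R h) \<bullet> h - g x \<bullet> h\<bar> = \<bar>(g (x + t *\<^sub>R h) - g x) \<bullet> h\<bar>"
      by (simp add: inner_diff_left)
    also have "\<dots> \<le> norm (g (x + t *\<^sub>R h) - g x) * norm h"
      by (rule Cauchy_Schwarz_ineq2)
    also have "\<dots> \<le> (L * norm (t *\<^sub>R h)) * norm h"
      using lip[of "x + t *\<^sub>R h" x] by (intro mult_right_mono) auto
    also have "\<dots> = L * t * (norm h)\<^sup>2"
      using that by (simp add: power2_eq_square)
    finally show ?thesis .
  qed
  have up: "\<phi> 1 - L / 2 * 1\<^sup>2 * (norm h)\<^sup>2 \<le> \<phi> 0 - L / 2 * 0\<^sup>2 * (norm h)\<^sup>2"
  proof (rule DERIV_nonpos_imp_nonincreasing[where f = "\<lambda>t. \<phi> t - L / 2 * t\<^sup>2 * (norm h)\<^sup>2"])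
    fix t :: real assume t: "0 \<le> t" "t \<le> 1"
    show "\<exists>y. ((\<lambda>t. \<phi> t - L / 2 * t\<^sup>2 * (norm h)\<^sup>2) has_real_derivative y) (at t) \<and> y \<le> 0"
      using dbound[OF t(1)]
      by (intro exI conjI) (rule derivative_eq_intros d\<phi> refl | simp add: abs_le_iff algebra_simps)+
  qed simp
  have lo: "\<phi> 0 + L / 2 * 0\<^sup>2 * (norm h)\<^sup>2 \<le> \<phi> 1 + L / 2 * 1\<^sup>2 * (norm h)\<^sup>2"
  proof (rule DERIV_nonneg_imp_nondecreasing[where f = "\<lambda>t. \<phi> t + L / 2 * t\<^sup>2 * (norm h)\<^sup>2"])
    fix t :: real assume t: "0 \<le> t" "t \<le> 1"
    show "\<exists>y. ((\<lambda>t. \<phi> t + L / 2 * t\<^sup>2 * (norm h)\<^sup>2) has_real_derivative y) (at t) \<and> y \<ge> 0"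
      using dbound[OF t(1)]
      by (intro exI conjI) (rule derivative_eq_intros d\<phi> refl | simp add: abs_le_iff algebra_simps)+
  qed simp
  have "\<phi> 1 = f y - g x \<bullet> (y - x)" "\<phi> 0 = f x" by (simp_all add: \<phi>_def h_def)
  with up lo have A: "f y - g x \<bullet> (y - x) - L / 2 * (norm (y - x))\<^sup>2 \<le> f x"
    and B: "f x \<le> f y - g x \<bullet> (y - x) + L / 2 * (norm (y - x))\<^sup>2"
    by (simp_all add: h_def)
  show ?thesis unfolding abs_le_iff using A B by linarith
qed


lemma le_one_plus_sq: "(t::real) \<le> 1 + t\<^sup>2"
proof -
  have "0 \<le> (t - 1)\<^sup>2" by simp
  then have "2 * t \<le> 1 + t\<^sup>2" by (simp add: power2_eq_square algebra_simps)
  moreover have "0 \<le> t\<^sup>2" by simp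
  ultimately show ?thesis by linarith
qed

lemma lin_int:
  fixes v :: "'a::euclidean_space"
  shows "has_bochner_integral lborel (\<lambda>u::'a. (a + s * (v \<bullet> u) + b * (norm u)\<^sup>2) * exp (- (norm u)\<^sup>2))
     (a * sqrt pi ^ DIM('a) + b * (real DIM('a) * sqrt pi ^ DIM('a) / 2))"
proof -
  have i1: "integrable lborel (\<lambda>u::'a. (v \<bullet> u) * exp (- (norm u)\<^sup>2))"
  proof (rule Bochner_Integration.integrable_bound[OF int_poly[of "norm v" "norm v"]])
    show "(\<lambda>u::'a. (v \<bullet> u) * exp (- (norm u)\<^sup>2)) \<in> borel_measurable lborel" by measurable
    show "AE x in lborel. norm ((v \<bullet> x) * exp (- (norm x)\<^sup>2)) \<le> norm ((norm v + norm v * (norm x)\<^sup>2) * exp (- (norm x)\<^sup>2))"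
    proof (rule AE_I2)
      fix x :: 'a
      have "\<bar>v \<bullet> x\<bar> \<le> norm v * norm x" by (rule Cauchy_Schwarz_ineq2)
      also have "\<dots> \<le> norm v * (1 + (norm x)\<^sup>2)" by (intro mult_left_mono le_one_plus_sq) auto
      finally have "\<bar>v \<bullet> x\<bar> \<le> norm v + norm v * (norm x)\<^sup>2" by (simp add: algebra_simps)
      then show "norm ((v \<bullet> x) * exp (- (norm x)\<^sup>2)) \<le> norm ((norm v + norm v * (norm x)\<^sup>2) * exp (- (norm x)\<^sup>2))"
        by (simp add: abs_mult)
    qed
  qed
  have h1: "has_bochner_integral lborel (\<lambda>u::'a. (v \<bullet> u) * exp (- (norm u)\<^sup>2)) 0"
    using i1 int_odd[of v] by (simp add: has_bochner_integral_iff)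
  have "has_bochner_integral lborel (\<lambda>u::'a. a * exp (- (norm u)\<^sup>2) + s * ((v \<bullet> u) * exp (- (norm u)\<^sup>2))
      + b * ((norm u)\<^sup>2 * exp (- (norm u)\<^sup>2)))
     (a * sqrt pi ^ DIM('a) + s * 0 + b * (real DIM('a) * sqrt pi ^ DIM('a) / 2))"
    by (intro has_bochner_integral_add has_bochner_integral_mult_right intW intM h1)
  then show ?thesis by (simp add: algebra_simps)
qed

theorem proposition3p7:
  fixes f :: "'a::euclidean_space \<Rightarrow> real" and L \<epsilon> \<sigma> :: real
  assumes "L > 0" and "L_smooth L f" and "bdd_below (range f)"
    and "\<epsilon> > 0" and "bounded (sublevel_opt f \<epsilon>)"
    and "0 < \<sigma>" and "\<sigma> < sqrt (4 * \<epsilon> / (3 * L * real DIM('a)))"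
  shows "\<exists>x. \<forall>y. gauss_smooth f \<sigma> x \<le> gauss_smooth f \<sigma> y"
proof -
  note L = assms(1) and bdd = assms(3) and eps = assms(4) and bS = assms(5) and sig = assms(6) assms(7)
  obtain g where der: "\<And>x. (f has_derivative (\<lambda>h. g x \<bullet> h)) (at x)"
    and lip: "\<And>x y. norm (g x - g y) \<le> L * norm (x - y)"
    using assms(2) unfolding L_smooth_def by blast
  have Q: "\<bar>f y - f x - g x \<bullet> (y - x)\<bar> \<le> L / 2 * (norm (y - x))\<^sup>2" for x y
    by (rule quad_bound[OF der lip])
  have contf: "continuous_on UNIV f"
    by (intro continuous_at_imp_continuous_on ballI has_derivative_continuous[OF der])
  have fm[measurable]: "f \<in> borel_measurable borel"
    by (rule borel_measurable_continuous_onI[OF contf])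
  define w where "w = (\<lambda>u::'a. exp (- (norm u)\<^sup>2))"
  define Z where "Z = sqrt pi ^ DIM('a)"
  define d where "d = real DIM('a)"
  have Zpos: "Z > 0" unfolding Z_def by simp
  have dpos: "d > 0" unfolding d_def by simp
  define F where "F = (\<lambda>x. \<integral>u. f (x + \<sigma> *\<^sub>R u) * w u \<partial>lborel)"
  define c where "c = pi powr (- real DIM('a) / 2)"
  have cpos: "c > 0" unfolding c_def by simp
  have gs: "gauss_smooth f \<sigma> = (\<lambda>x. c * F x)"
    by (simp add: fun_eq_iff gauss_smooth_def c_def F_def w_def)
  have wm[measurable]: "w \<in> borel_measurable borel" unfolding w_def by measurable
  have wpos: "w u \<ge> 0" for u unfolding w_def by simp
  have shift: "\<bar>f (x + \<sigma> *\<^sub>R u) - f x - \<sigma> * (g x \<bullet> u)\<bar> \<le> L * \<sigma>\<^sup>2 / 2 * (norm u)\<^sup>2" for x u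
    using Q[of "x + \<sigma> *\<^sub>R u" x] sig by (simp add: power_mult_distrib)
  have lin: "has_bochner_integral lborel (\<lambda>u. (a + s * (v \<bullet> u) + b * (norm u)\<^sup>2) * w u) (a * Z + b * (d * Z / 2))"
    for a s b and v :: 'a
    using lin_int[of a s v b] unfolding w_def Z_def d_def .
  have intf: "integrable lborel (\<lambda>u. f (x + \<sigma> *\<^sub>R u) * w u)" for x
  proof (rule Bochner_Integration.integrable_bound[OF int_poly[of "\<bar>f x\<bar> + \<sigma> * norm (g x)" "\<sigma> * norm (g x) + L * \<sigma>\<^sup>2 / 2"]])
    show "(\<lambda>u. f (x + \<sigma> *\<^sub>R u) * w u) \<in> borel_measurable lborel" by measurable
    show "AE u in lborel. norm (f (x + \<sigma> *\<^sub>R u) * w u) \<le> norm (((\<bar>f x\<bar> + \<sigma> * norm (g x)) + (\<sigma> * norm (g x) + L * \<sigma>\<^sup>2 / 2) * (norm u)\<^sup>2) * exp (- (norm u)\<^sup>2))"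
    proof (rule AE_I2)
      fix u :: 'a
      have "\<bar>g x \<bullet> u\<bar> \<le> norm (g x) * norm u" by (rule Cauchy_Schwarz_ineq2)
      also have "\<dots> \<le> norm (g x) * (1 + (norm u)\<^sup>2)" by (intro mult_left_mono le_one_plus_sq) auto
      finally have "\<sigma> * \<bar>g x \<bullet> u\<bar> \<le> \<sigma> * (norm (g x) * (1 + (norm u)\<^sup>2))"
        using sig by (intro mult_left_mono) auto
      then have a1: "\<bar>\<sigma> * (g x \<bullet> u)\<bar> \<le> \<sigma> * norm (g x) + \<sigma> * norm (g x) * (norm u)\<^sup>2"
        using sig by (simp add: abs_mult algebra_simps)
      have "\<bar>f (x + \<sigma> *\<^sub>R u)\<bar> \<le> (\<bar>f x\<bar> + \<sigma> * norm (g x)) + (\<sigma> * norm (g x) + L * \<sigma>\<^sup>2 / 2) * (norm u)\<^sup>2"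
        using shift[of x u] a1 abs_ge_self[of "f x"] abs_ge_minus_self[of "f x"]
        unfolding abs_le_iff by (simp add: algebra_simps)
      then show "norm (f (x + \<sigma> *\<^sub>R u) * w u) \<le> norm (((\<bar>f x\<bar> + \<sigma> * norm (g x)) + (\<sigma> * norm (g x) + L * \<sigma>\<^sup>2 / 2) * (norm u)\<^sup>2) * exp (- (norm u)\<^sup>2))"
        by (simp add: abs_mult w_def) 
    qed
  qed
  have Fbound: "Z * f x - L * \<sigma>\<^sup>2 / 2 * (d * Z / 2) \<le> F x \<and> F x \<le> Z * f x + L * \<sigma>\<^sup>2 / 2 * (d * Z / 2)" for x
  proof
    have lo: "has_bochner_integral lborel (\<lambda>u. (f x + \<sigma> * (g x \<bullet> u) + (- (L * \<sigma>\<^sup>2 / 2)) * (norm u)\<^sup>2) * w u)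
       (f x * Z + (- (L * \<sigma>\<^sup>2 / 2)) * (d * Z / 2))" by (rule lin)
    have "integral\<^sup>L lborel (\<lambda>u. (f x + \<sigma> * (g x \<bullet> u) + (- (L * \<sigma>\<^sup>2 / 2)) * (norm u)\<^sup>2) * w u) \<le> F x"
      unfolding F_def
    proof (rule integral_mono)
      show "integrable lborel (\<lambda>u. (f x + \<sigma> * (g x \<bullet> u) + (- (L * \<sigma>\<^sup>2 / 2)) * (norm u)\<^sup>2) * w u)"
        using lo by (simp add: has_bochner_integral_iff)
      show "integrable lborel (\<lambda>u. f (x + \<sigma> *\<^sub>R u) * w u)" by (rule intf)
      fix u :: 'a
      have "f x + \<sigma> * (g x \<bullet> u) + (- (L * \<sigma>\<^sup>2 / 2)) * (norm u)\<^sup>2 \<le> f (x + \<sigma> *\<^sub>R u)"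
        using shift[of x u] unfolding abs_le_iff by linarith
      then show "(f x + \<sigma> * (g x \<bullet> u) + (- (L * \<sigma>\<^sup>2 / 2)) * (norm u)\<^sup>2) * w u \<le> f (x + \<sigma> *\<^sub>R u) * w u"
        using wpos by (intro mult_right_mono) auto
    qed
    with lo show "Z * f x - L * \<sigma>\<^sup>2 / 2 * (d * Z / 2) \<le> F x"
      by (simp add: has_bochner_integral_iff algebra_simps)
  next
    have hi: "has_bochner_integral lborel (\<lambda>u. (f x + \<sigma> * (g x \<bullet> u) + (L * \<sigma>\<^sup>2 / 2) * (norm u)\<^sup>2) * w u)
       (f x * Z + (L * \<sigma>\<^sup>2 / 2) * (d * Z / 2))" by (rule lin)
    have "F x \<le> integral\<^sup>L lborel (\<lambda>u. (f x + \<sigma> * (g x \<bullet> u) + (L * \<sigma>\<^sup>2 / 2) * (norm u)\<^sup>2) * w u)"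
      unfolding F_def
    proof (rule integral_mono)
      show "integrable lborel (\<lambda>u. (f x + \<sigma> * (g x \<bullet> u) + (L * \<sigma>\<^sup>2 / 2) * (norm u)\<^sup>2) * w u)"
        using hi by (simp add: has_bochner_integral_iff)
      show "integrable lborel (\<lambda>u. f (x + \<sigma> *\<^sub>R u) * w u)" by (rule intf)
      fix u :: 'a
      have "f (x + \<sigma> *\<^sub>R u) \<le> f x + \<sigma> * (g x \<bullet> u) + (L * \<sigma>\<^sup>2 / 2) * (norm u)\<^sup>2"
        using shift[of x u] unfolding abs_le_iff by linarith
      then show "f (x + \<sigma> *\<^sub>R u) * w u \<le> (f x + \<sigma> * (g x \<bullet> u) + (L * \<sigma>\<^sup>2 / 2) * (norm u)\<^sup>2) * w u"
        using wpos by (intro mult_right_mono) auto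
    qed
    with hi show "F x \<le> Z * f x + L * \<sigma>\<^sup>2 / 2 * (d * Z / 2)"
      by (simp add: has_bochner_integral_iff algebra_simps)
  qed
  have contF: "continuous_on UNIV F"
  proof (intro continuous_at_imp_continuous_on ballI continuous_at_sequentiallyI)
    fix a X assume X: "X \<longlonglongrightarrow> (a::'a)"
    obtain K where K: "K > 0" "\<And>n. norm (X n) \<le> K"
      using convergent_imp_Bseq[OF convergentI[OF X]] by (auto elim: BseqE)
    define A where "A = \<bar>f 0\<bar> + norm (g 0) * (K + \<sigma>) + L * K\<^sup>2"
    define B where "B = norm (g 0) * \<sigma> + L * \<sigma>\<^sup>2"
    show "(\<lambda>n. F (X n)) \<longlonglongrightarrow> F a"
      unfolding F_def
    proof (rule integral_dominated_convergence[where w = "\<lambda>u. (A + B * (norm u)\<^sup>2) * exp (- (norm u)\<^sup>2)"])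
      show "(\<lambda>u. f (a + \<sigma> *\<^sub>R u) * w u) \<in> borel_measurable lborel" by measurable
      show "(\<lambda>u. f (X n + \<sigma> *\<^sub>R u) * w u) \<in> borel_measurable lborel" for n by measurable
      show "integrable lborel (\<lambda>u. (A + B * (norm u)\<^sup>2) * exp (- (norm u)\<^sup>2))" by (rule int_poly)
      show "AE u in lborel. (\<lambda>n. f (X n + \<sigma> *\<^sub>R u) * w u) \<longlonglongrightarrow> f (a + \<sigma> *\<^sub>R u) * w u"
      proof (rule AE_I2)
        fix u
        have "(\<lambda>n. X n + \<sigma> *\<^sub>R u) \<longlonglongrightarrow> a + \<sigma> *\<^sub>R u" by (intro tendsto_intros X)
        then have "(\<lambda>n. f (X n + \<sigma> *\<^sub>R u)) \<longlonglongrightarrow> f (a + \<sigma> *\<^sub>R u)"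
          by (rule continuous_on_tendsto_compose[OF contf]) auto
        then show "(\<lambda>n. f (X n + \<sigma> *\<^sub>R u) * w u) \<longlonglongrightarrow> f (a + \<sigma> *\<^sub>R u) * w u"
          by (intro tendsto_intros)
      qed
      show "AE u in lborel. norm (f (X n + \<sigma> *\<^sub>R u) * w u) \<le> (A + B * (norm u)\<^sup>2) * exp (- (norm u)\<^sup>2)" for n
      proof (rule AE_I2)
        fix u :: 'a
        define y where "y = X n + \<sigma> *\<^sub>R u"
        have ny: "norm y \<le> K + \<sigma> * norm u"
          unfolding y_def using norm_triangle_ineq[of "X n" "\<sigma> *\<^sub>R u"] K(2)[of n] sig by simp
        have ny2: "(norm y)\<^sup>2 \<le> 2 * K\<^sup>2 + 2 * \<sigma>\<^sup>2 * (norm u)\<^sup>2"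
        proof -
          have "(norm y)\<^sup>2 \<le> (K + \<sigma> * norm u)\<^sup>2" using ny by (intro power_mono) auto
          also have "\<dots> \<le> 2 * K\<^sup>2 + 2 * \<sigma>\<^sup>2 * (norm u)\<^sup>2"
          proof -
            have "0 \<le> (K - \<sigma> * norm u)\<^sup>2" by simp
            then show ?thesis by (simp add: power2_eq_square algebra_simps)
          qed
          finally show ?thesis .
        qed
        have "\<bar>f y\<bar> \<le> \<bar>f 0\<bar> + \<bar>g 0 \<bullet> y\<bar> + L / 2 * (norm y)\<^sup>2"
          using Q[of y 0] abs_ge_self[of "f 0"] abs_ge_minus_self[of "f 0"] abs_ge_self[of "g 0 \<bullet> y"] abs_ge_minus_self[of "g 0 \<bullet> y"]
          unfolding abs_le_iff by simp
        also have "\<bar>g 0 \<bullet> y\<bar> \<le> norm (g 0) * (K + \<sigma> * (1 + (norm u)\<^sup>2))"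
        proof -
          have "\<bar>g 0 \<bullet> y\<bar> \<le> norm (g 0) * norm y" by (rule Cauchy_Schwarz_ineq2)
          also have "\<dots> \<le> norm (g 0) * (K + \<sigma> * (1 + (norm u)\<^sup>2))"
            using ny le_one_plus_sq[of "norm u"] sig
            by (intro mult_left_mono) (auto intro: order_trans mult_left_mono)
          finally show ?thesis .
        qed
        also have "L / 2 * (norm y)\<^sup>2 \<le> L / 2 * (2 * K\<^sup>2 + 2 * \<sigma>\<^sup>2 * (norm u)\<^sup>2)"
          using ny2 L by (intro mult_left_mono) auto
        finally have "\<bar>f y\<bar> \<le> A + B * (norm u)\<^sup>2"
          unfolding A_def B_def by (simp add: algebra_simps)
        then show "norm (f (X n + \<sigma> *\<^sub>R u) * w u) \<le> (A + B * (norm u)\<^sup>2) * exp (- (norm u)\<^sup>2)"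
          unfolding y_def w_def by (simp add: abs_mult)
      qed
    qed
  qed
  define m where "m = (INF y. f y)"
  have fge: "m \<le> f y" for y unfolding m_def by (rule cINF_lower[OF bdd]) simp
  obtain x0 where x0: "f x0 < m + \<epsilon> / 3"
    using cInf_lessD[of "range f" "m + \<epsilon> / 3"] eps unfolding m_def by auto
  define S where "S = sublevel_opt f \<epsilon>"
  have x0S: "x0 \<in> S" using x0 eps unfolding S_def sublevel_opt_def m_def by auto
  have cK: "compact (closure S)" using bS unfolding S_def by simp
  have "closure S \<noteq> {}" using x0S closure_subset by auto
  moreover have "continuous_on (closure S) (gauss_smooth f \<sigma>)"
    unfolding gs by (intro continuous_intros continuous_on_subset[OF contF]) auto
  ultimately obtain xs where xs: "xs \<in> closure S" "\<And>y. y \<in> closure S \<Longrightarrow> gauss_smooth f \<sigma> xs \<le> gauss_smooth f \<sigma> y"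
    using continuous_attains_inf[OF cK] by blast
  have r: "4 * \<epsilon> / (3 * L * d) > 0" using eps L dpos by simp
  have "\<sigma>\<^sup>2 < (sqrt (4 * \<epsilon> / (3 * L * d)))\<^sup>2"
    using sig unfolding d_def by (intro power_strict_mono) auto
  then have "\<sigma>\<^sup>2 < 4 * \<epsilon> / (3 * L * d)" using r by simp
  then have s2: "L * \<sigma>\<^sup>2 * d < 4 * \<epsilon> / 3" using L dpos by (simp add: field_simps)
  show ?thesis
  proof (intro exI allI)
    fix y
    show "gauss_smooth f \<sigma> xs \<le> gauss_smooth f \<sigma> y"
    proof (cases "y \<in> closure S")
      case True then show ?thesis by (rule xs)
    next
      case False
      then have "y \<notin> S" using closure_subset by auto
      then have fy: "f y - m > \<epsilon>" unfolding S_def sublevel_opt_def m_def by auto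
      have e1: "Z * (2 * \<epsilon> / 3) \<le> Z * (f y - f x0)" using fy x0 Zpos by (intro mult_left_mono) auto
      have e2: "Z * (L * \<sigma>\<^sup>2 * d) \<le> Z * (4 * \<epsilon> / 3)" using s2 Zpos by (intro mult_left_mono) auto
      have e3: "L * \<sigma>\<^sup>2 / 2 * (d * Z / 2) = Z * (L * \<sigma>\<^sup>2 * d) / 4" by (simp add: algebra_simps)
      have "F x0 \<le> F y" using Fbound[of x0] Fbound[of y] e1 e2 e3 by (simp add: algebra_simps) 
      then have "gauss_smooth f \<sigma> x0 \<le> gauss_smooth f \<sigma> y" unfolding gs using cpos by simp
      moreover have "gauss_smooth f \<sigma> xs \<le> gauss_smooth f \<sigma> x0" using xs(2) x0S closure_subset by auto
      ultimately show ?thesis by linarith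
    qed
  qed
qed

end
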